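(* Let $\Gamma=(V,E)$ be a reflexive, locally finite, $k$-separable graph with $k\ge2$. Let $A,F$ be $k$-fragments of $\Gamma$ such that $|A|\le|F^{\curlywedge}|$ and $|A\cap F|\ge k-1$. Then $$|A\cap\partial(F)|\le|\partial(A)\cap F^{\curlywedge}|,\qquad |\Gamma(A)\cap\Gamma(F)|\le|A\cap F|+\kappa_k(\Gamma),$$ and $$|F^{\curlywedge}\setminus A^{\curlywedge}|\le|A\setminus F|+\kappa_k(\Gamma)-\kappa_{k-1}(\Gamma).$$
   Context: A graph is a pair $\Gamma=(V,E)$ with $E\subseteq V\times V$; reflexive means $(x,x)\in E$ for all $x$; locally finite means each $\Gamma(x)=\{y:(x,y)\in E\}$ is finite. For $A\subseteq V$: $\Gamma(A)=\bigcup_{x\in A}\Gamma(x)$, $\partial(A)=\Gamma(A)\setminus A$, $A^{\curlywedge}=V\setminus(A\cup\Gamma(A))$. $\Gamma$ is $j$-separable if some finite $X$ has $|X|\ge j$ and $|V\setminus\Gamma(X)|\ge j$; then $\kappa_j(\Gamma)=\min\{|\partial(X)|: X\text{ finite},|X|\ge j,|V\setminus\Gamma(X)|\ge j\}$, and a $j$-fragment is a finite $X$ with $|X|\ge j$, $|V\setminus\Gamma(X)|\ge j$ and $|\partial(X)|=\kappa_j(\Gamma)$. (A $k$-separable graph is also $(k-1)$-separable.) *)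

theory Defs
  imports Main
begin

definition graph :: "'a set \<Rightarrow> ('a \<times> 'a) set \<Rightarrow> bool" where
  "graph V E \<longleftrightarrow> E \<subseteq> V \<times> V"

definition reflexive_graph :: "'a set \<Rightarrow> ('a \<times> 'a) set \<Rightarrow> bool" where
  "reflexive_graph V E \<longleftrightarrow> (\<forall>x\<in>V. (x, x) \<in> E)"

definition nbhd :: "('a \<times> 'a) set \<Rightarrow> 'a \<Rightarrow> 'a set" where
  "nbhd E x = {y. (x, y) \<in> E}"

definition locally_finite :: "'a set \<Rightarrow> ('a \<times> 'a) set \<Rightarrow> bool" where
  "locally_finite V E \<longleftrightarrow> (\<forall>x\<in>V. finite (nbhd E x))"

definition nbhd_set :: "('a \<times> 'a) set \<Rightarrow> 'a set \<Rightarrow> 'a set" where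
  "nbhd_set E A = (\<Union>x\<in>A. nbhd E x)"

definition boundary :: "('a \<times> 'a) set \<Rightarrow> 'a set \<Rightarrow> 'a set" where
  "boundary E A = nbhd_set E A - A"

definition exterior :: "'a set \<Rightarrow> ('a \<times> 'a) set \<Rightarrow> 'a set \<Rightarrow> 'a set" where
  "exterior V E A = V - (A \<union> nbhd_set E A)"

definition admissible :: "'a set \<Rightarrow> ('a \<times> 'a) set \<Rightarrow> nat \<Rightarrow> 'a set \<Rightarrow> bool" where
  "admissible V E j X \<longleftrightarrow> X \<subseteq> V \<and> finite X \<and> card X \<ge> j \<and>
     (infinite (V - nbhd_set E X) \<or> card (V - nbhd_set E X) \<ge> j)"

definition separable :: "'a set \<Rightarrow> ('a \<times> 'a) set \<Rightarrow> nat \<Rightarrow> bool" where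
  "separable V E j \<longleftrightarrow> (\<exists>X. admissible V E j X)"

definition kappa :: "'a set \<Rightarrow> ('a \<times> 'a) set \<Rightarrow> nat \<Rightarrow> nat" where
  "kappa V E j = (LEAST n. \<exists>X. admissible V E j X \<and> card (boundary E X) = n)"

definition fragment :: "'a set \<Rightarrow> ('a \<times> 'a) set \<Rightarrow> nat \<Rightarrow> 'a set \<Rightarrow> bool" where
  "fragment V E j X \<longleftrightarrow> admissible V E j X \<and> card (boundary E X) = kappa V E j"

end

theory Submission
  imports Defs
begin

lemma kappa_le: "admissible V E j X \<Longrightarrow> kappa V E j \<le> card (boundary E X)"
  unfolding kappa_def by (rule Least_le) auto

lemma nbhd_sub: "graph V E \<Longrightarrow> nbhd_set E X \<subseteq> V"
  unfolding graph_def nbhd_set_def nbhd_def by auto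

lemma nbhd_refl: "reflexive_graph V E \<Longrightarrow> X \<subseteq> V \<Longrightarrow> X \<subseteq> nbhd_set E X"
  unfolding reflexive_graph_def nbhd_set_def nbhd_def by auto

lemma nbhd_fin: "locally_finite V E \<Longrightarrow> X \<subseteq> V \<Longrightarrow> finite X \<Longrightarrow> finite (nbhd_set E X)"
  unfolding locally_finite_def nbhd_set_def by auto

lemma nbhd_Un: "nbhd_set E (A \<union> B) = nbhd_set E A \<union> nbhd_set E B"
  unfolding nbhd_set_def by auto

lemma nbhd_Int: "nbhd_set E (A \<inter> B) \<subseteq> nbhd_set E A \<inter> nbhd_set E B"
  unfolding nbhd_set_def by auto

lemma card_nbhd:
  assumes "reflexive_graph V E" "locally_finite V E" "X \<subseteq> V" "finite X"
  shows "card (nbhd_set E X) = card X + card (boundary E X)"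
proof -
  have s: "X \<subseteq> nbhd_set E X" using nbhd_refl assms by blast
  have f: "finite (nbhd_set E X)" using nbhd_fin assms by blast
  have "card (boundary E X) = card (nbhd_set E X) - card X"
    unfolding boundary_def using s f by (simp add: card_Diff_subset finite_subset)
  moreover have "card X \<le> card (nbhd_set E X)" using s f card_mono by blast
  ultimately show ?thesis by simp
qed

theorem mainTheorem16:
  fixes V :: "'a set" and E :: "('a \<times> 'a) set" and k :: nat and A F :: "'a set"
  assumes "graph V E"
    and "reflexive_graph V E"
    and "locally_finite V E"
    and "separable V E k"
    and "k \<ge> 2"
    and "fragment V E k A"
    and "fragment V E k F"
    and "finite (exterior V E F) \<longrightarrow> card A \<le> card (exterior V E F)"
    and "card (A \<inter> F) \<ge> k - 1"
  shows "card (A \<inter> boundary E F) \<le> card (boundary E A \<inter> exterior V E F) \<and>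
         card (nbhd_set E A \<inter> nbhd_set E F) \<le> card (A \<inter> F) + kappa V E k \<and>
         int (card (exterior V E F - exterior V E A))
           \<le> int (card (A - F)) + int (kappa V E k) - int (kappa V E (k - 1))"
proof -
  note g = assms(1) and r = assms(2) and lf = assms(3)
  define K where "K = kappa V E k"
  have AV: "A \<subseteq> V" and fA: "finite A" and cA: "card A \<ge> k" and bA: "card (boundary E A) = K"
    using assms(6) unfolding fragment_def admissible_def K_def by auto
  have FV: "F \<subseteq> V" and fF: "finite F" and cF: "card F \<ge> k" and bF: "card (boundary E F) = K"
    and eF: "infinite (V - nbhd_set E F) \<or> card (V - nbhd_set E F) \<ge> k"
    using assms(7) unfolding fragment_def admissible_def K_def by auto
  have GAV: "nbhd_set E A \<subseteq> V" and GFV: "nbhd_set E F \<subseteq> V" using nbhd_sub g by blast+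
  have AGA: "A \<subseteq> nbhd_set E A" and FGF: "F \<subseteq> nbhd_set E F" using nbhd_refl r AV FV by blast+
  have fGA: "finite (nbhd_set E A)" and fGF: "finite (nbhd_set E F)"
    using nbhd_fin lf AV FV fA fF by blast+
  have cGA: "card (nbhd_set E A) = card A + K" using card_nbhd[OF r lf AV fA] bA by simp
  have cGF: "card (nbhd_set E F) = card F + K" using card_nbhd[OF r lf FV fF] bF by simp
  have UV: "A \<union> F \<subseteq> V" and fU: "finite (A \<union> F)" using AV FV fA fF by auto
  have cGU: "card (nbhd_set E (A \<union> F)) = card (A \<union> F) + card (boundary E (A \<union> F))"
    using card_nbhd[OF r lf UV fU] .
  have GU: "nbhd_set E (A \<union> F) = nbhd_set E A \<union> nbhd_set E F" by (rule nbhd_Un)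
  have extF: "exterior V E F = V - nbhd_set E F" unfolding exterior_def using FGF by auto
  have cAF: "card A + card F = card (A \<union> F) + card (A \<inter> F)" using card_Un_Int[OF fA fF] by simp
  have key: "card (boundary E (A \<union> F)) \<ge> K"
  proof (cases "infinite (V - nbhd_set E (A \<union> F)) \<or> card (V - nbhd_set E (A \<union> F)) \<ge> k")
    case True
    have "card (A \<union> F) \<ge> k" using cA card_mono[OF fU, of A] by auto
    then have "admissible V E k (A \<union> F)" using True UV fU unfolding admissible_def by auto
    then show ?thesis using kappa_le K_def by metis
  next
    case False
    hence fin1: "finite (V - nbhd_set E (A \<union> F))" and c1: "card (V - nbhd_set E (A \<union> F)) < k" by auto
    have "V - nbhd_set E F \<subseteq> (V - nbhd_set E (A \<union> F)) \<union> nbhd_set E A" using GU by auto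
    hence fin2: "finite (V - nbhd_set E F)" using fin1 fGA finite_subset by blast
    hence cle: "card A \<le> card (V - nbhd_set E F)" using assms(8) extF by simp
    have fV: "finite V" using fin2 fGF finite_subset[of V "(V - nbhd_set E F) \<union> nbhd_set E F"] by auto
    have v1: "card V = card (nbhd_set E (A \<union> F)) + card (V - nbhd_set E (A \<union> F))"
      using card_Diff_subset[of "nbhd_set E (A \<union> F)" V] GU GAV GFV fGA fGF
        card_mono[OF fV, of "nbhd_set E (A \<union> F)"] by auto
    have v2: "card V = card (nbhd_set E F) + card (V - nbhd_set E F)"
      using card_Diff_subset[of "nbhd_set E F" V] GFV fGF card_mono[OF fV GFV] by auto
    have "card (V - nbhd_set E (A \<union> F)) \<le> k - 1" using c1 by auto
    then show ?thesis using v1 v2 cGU cGF cAF cle assms(9) by linarith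
  qed
  have cI: "card (nbhd_set E A \<union> nbhd_set E F) + card (nbhd_set E A \<inter> nbhd_set E F)
      = card (nbhd_set E A) + card (nbhd_set E F)" using card_Un_Int[OF fGA fGF] by simp
  have cGU': "card (nbhd_set E (A \<union> F)) = card (nbhd_set E A \<union> nbhd_set E F)" using GU by simp
  have c2: "card (nbhd_set E A \<inter> nbhd_set E F) \<le> card (A \<inter> F) + K"
    using cI cGA cGF cGU cGU' key cAF by linarith
  have sub1: "boundary E (A \<union> F) \<subseteq> (boundary E F - A) \<union> (boundary E A \<inter> exterior V E F)"
  proof
    fix x assume "x \<in> boundary E (A \<union> F)"
    hence x: "x \<in> nbhd_set E A \<union> nbhd_set E F" "x \<notin> A" "x \<notin> F"
      using GU unfolding boundary_def by auto
    show "x \<in> (boundary E F - A) \<union> (boundary E A \<inter> exterior V E F)"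
    proof (cases "x \<in> nbhd_set E F")
      case True thus ?thesis using x unfolding boundary_def by blast
    next
      case False
      hence "x \<in> nbhd_set E A" using x by blast
      hence "x \<in> V" using GAV by blast
      thus ?thesis using x False \<open>x \<in> nbhd_set E A\<close> unfolding boundary_def exterior_def by blast
    qed
  qed
  have fbF: "finite (boundary E F)" and fbA: "finite (boundary E A)"
    using fGF fGA unfolding boundary_def by auto
  have "card (boundary E (A \<union> F)) \<le> card ((boundary E F - A) \<union> (boundary E A \<inter> exterior V E F))"
    by (rule card_mono) (use fbF fbA sub1 in auto)
  also have "\<dots> \<le> card (boundary E F - A) + card (boundary E A \<inter> exterior V E F)"
    by (rule card_Un_le)
  finally have u1: "card (boundary E (A \<union> F)) \<le> card (boundary E F - A) + card (boundary E A \<inter> exterior V E F)" .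
  have u2: "card (boundary E F) = card (boundary E F - A) + card (A \<inter> boundary E F)"
  proof -
    have "boundary E F = (boundary E F - A) \<union> (A \<inter> boundary E F)" by blast
    hence "card (boundary E F) = card ((boundary E F - A) \<union> (A \<inter> boundary E F))" by simp
    also have "\<dots> = card (boundary E F - A) + card (A \<inter> boundary E F)"
      by (rule card_Un_disjoint) (use fbF in auto)
    finally show ?thesis .
  qed
  have c1: "card (A \<inter> boundary E F) \<le> card (boundary E A \<inter> exterior V E F)"
    using u1 u2 key bF by linarith
  have IV: "A \<inter> F \<subseteq> V" and fI: "finite (A \<inter> F)" using AV fA by auto
  have "V - nbhd_set E F \<subseteq> V - nbhd_set E (A \<inter> F)" using nbhd_Int[of E A F] by blast
  hence "infinite (V - nbhd_set E (A \<inter> F)) \<or> card (V - nbhd_set E (A \<inter> F)) \<ge> k - 1"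
  proof (cases "finite (V - nbhd_set E (A \<inter> F))")
    case True
    have fin: "finite (V - nbhd_set E F)" by (rule finite_subset[OF \<open>V - nbhd_set E F \<subseteq> _\<close> True])
    hence "card (V - nbhd_set E F) \<ge> k" using eF by blast
    moreover have "card (V - nbhd_set E F) \<le> card (V - nbhd_set E (A \<inter> F))"
      by (rule card_mono) (use True \<open>V - nbhd_set E F \<subseteq> _\<close> in auto)
    ultimately have "k - 1 \<le> card (V - nbhd_set E (A \<inter> F))" by linarith
    thus ?thesis by blast
  qed simp
  hence "admissible V E (k - 1) (A \<inter> F)" using IV fI assms(9) unfolding admissible_def by auto
  hence k1: "kappa V E (k - 1) \<le> card (boundary E (A \<inter> F))" by (rule kappa_le)
  have cGI: "card (nbhd_set E (A \<inter> F)) = card (A \<inter> F) + card (boundary E (A \<inter> F))"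
    using card_nbhd[OF r lf IV fI] .
  have "card (nbhd_set E (A \<inter> F)) \<le> card (nbhd_set E A \<inter> nbhd_set E F)"
    by (rule card_mono) (use fGA nbhd_Int[of E A F] in auto)
  have sub3: "exterior V E F - exterior V E A \<subseteq> nbhd_set E A - (nbhd_set E A \<inter> nbhd_set E F)"
    using AGA unfolding exterior_def by auto
  have "card (exterior V E F - exterior V E A) \<le> card (nbhd_set E A - (nbhd_set E A \<inter> nbhd_set E F))"
    by (rule card_mono) (use fGA sub3 in auto)
  also have "\<dots> = card (nbhd_set E A) - card (nbhd_set E A \<inter> nbhd_set E F)"
    using fGA by (simp add: card_Diff_subset finite_subset)
  finally have e1: "card (exterior V E F - exterior V E A) \<le> card (nbhd_set E A) - card (nbhd_set E A \<inter> nbhd_set E F)" .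
  have cAmF: "card (A - F) + card (A \<inter> F) = card A"
  proof -
    have "A = (A - F) \<union> (A \<inter> F)" by blast
    hence "card A = card ((A - F) \<union> (A \<inter> F))" by simp
    also have "\<dots> = card (A - F) + card (A \<inter> F)"
      by (rule card_Un_disjoint) (use fA in auto)
    finally show ?thesis by simp
  qed
  have n3: "card (exterior V E F - exterior V E A) + kappa V E (k - 1) \<le> card (A - F) + K"
  proof -
    have m: "card (nbhd_set E A \<inter> nbhd_set E F) \<le> card (nbhd_set E A)"
      by (rule card_mono) (use fGA in auto)
    have e2: "card (exterior V E F - exterior V E A) + card (nbhd_set E A \<inter> nbhd_set E F) \<le> card (nbhd_set E A)"
      using e1 m by simp
    show ?thesis
      using e2 cGA cGI k1 cAmF \<open>card (nbhd_set E (A \<inter> F)) \<le> _\<close> by linarith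
  qed
  hence "int (card (exterior V E F - exterior V E A) + kappa V E (k - 1)) \<le> int (card (A - F) + K)"
    by (simp only: of_nat_le_iff)
  hence c3: "int (card (exterior V E F - exterior V E A))
           \<le> int (card (A - F)) + int K - int (kappa V E (k - 1))" by simp
  show ?thesis using c1 c2 c3 K_def by simp
qed

end
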